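(* Let $m\ge3$, $(f,\Gamma)$ an elliptic data and $g=e^{2\rho}g_0$ a punctured solution (see context). Then the associated map in the Poincaré ball model, $\varphi_P:\overline{\mathbb{S}^m_+}\setminus\{{\bf n}\}\to\mathbb{R}^{m+1}$, $$\varphi_P(x)=\frac{1-e^{-2\rho(x)}+|\nabla e^{-\rho}(x)|^2}{(1+e^{-\rho(x)})^2+|\nabla e^{-\rho}(x)|^2}\,x-\frac{1}{(1+e^{-\rho(x)})^2+|\nabla e^{-\rho}(x)|^2}\,\nabla(e^{-2\rho})(x),$$ admits a $C^1$ extension to $\overline{\mathbb{S}^m_+}$.
   Context: $\mathbb{S}^m\subset\mathbb{R}^{m+1}$ is the unit sphere with round metric $g_0$, gradient $\nabla$, norm $|\cdot|$; ${\bf n}=e_{m+1}$, $\mathbb{S}^m_+=\{x_{m+1}>0\}$. $\lambda(g)$ are the eigenvalues of $g^{-1}\mathrm{Sch}(g)$, $\mathrm{Sch}(g)=\frac{1}{m-2}(\mathrm{Ric}(g)-\frac{R(g)}{2(m-1)}g)$. Elliptic data: $(f,\Gamma)$ with $\Gamma\subset\mathbb{R}^m$ an open convex symmetric cone, $\{x_i>0\ \forall i\}\subset\Gamma\subset\{\sum x_i>0\}$, and $f\in C^0(\overline\Gamma)\cap C^1(\Gamma)$ symmetric, $f=0$ on $\partial\Gamma$, $f>0$ on $\Gamma$, homogeneous of degree 1, all partial derivatives of $f$ positive on $\Gamma$. A punctured solution is a conformal metric $g=e^{2\rho}g_0$ on $\overline{\mathbb{S}^m_+}\setminus\{{\bf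 n}\}$ with $f(\lambda(g))=0$ (and $\lambda(g)\in\overline\Gamma$) in $\mathbb{S}^m_+\setminus\{{\bf n}\}$, $h(g)=-e^{-\rho}\langle\nabla\rho,e_{m+1}\rangle=0$ on $\partial\mathbb{S}^m_+$, and such that $\sigma=e^{-\rho}$ admits a $C^2$ extension $\tilde\sigma$ to $\overline{\mathbb{S}^m_+}$ with $\tilde\sigma({\bf n})=0$. *)

theory Defs
  imports "HOL-Analysis.Analysis"
begin

definition C1_on :: "'a::real_normed_vector set \<Rightarrow> ('a \<Rightarrow> 'b::real_normed_vector) \<Rightarrow> bool" where
  "C1_on U F \<longleftrightarrow> (\<exists>F'. (\<forall>x\<in>U. (F has_derivative blinfun_apply (F' x)) (at x)) \<and> continuous_on U F')"

definition C2_on :: "'a::real_normed_vector set \<Rightarrow> ('a \<Rightarrow> 'b::real_normed_vector) \<Rightarrow> bool" where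
  "C2_on U F \<longleftrightarrow> (\<exists>F'. (\<forall>x\<in>U. (F has_derivative blinfun_apply (F' x)) (at x)) \<and> C1_on U F')"

definition elliptic_data :: "(real^'m \<Rightarrow> real) \<Rightarrow> (real^'m) set \<Rightarrow> bool" where
  "elliptic_data f \<Gamma> \<longleftrightarrow>
     open \<Gamma> \<and> convex \<Gamma> \<and> (\<forall>x\<in>\<Gamma>. \<forall>t>0. t *\<^sub>R x \<in> \<Gamma>) \<and>
     (\<forall>p x. p permutes (UNIV::'m set) \<longrightarrow> ((\<chi> i. x $ p i) \<in> \<Gamma> \<longleftrightarrow> x \<in> \<Gamma>)) \<and>
     {x. \<forall>i. x $ i > 0} \<subseteq> \<Gamma> \<and> \<Gamma> \<subseteq> {x. (\<Sum>i\<in>UNIV. x $ i) > 0} \<and>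
     continuous_on (closure \<Gamma>) f \<and> C1_on \<Gamma> f \<and>
     (\<forall>p. \<forall>x\<in>closure \<Gamma>. p permutes (UNIV::'m set) \<longrightarrow> f (\<chi> i. x $ p i) = f x) \<and>
     (\<forall>x\<in>frontier \<Gamma>. f x = 0) \<and> (\<forall>x\<in>\<Gamma>. f x > 0) \<and>
     (\<forall>x\<in>closure \<Gamma>. \<forall>t>0. f (t *\<^sub>R x) = t * f x) \<and>
     (\<forall>x\<in>\<Gamma>. \<forall>i. frechet_derivative f (at x) (axis i 1) > 0)"

text \<open>n is the north pole; the sphere is the unit sphere of the ambient Euclidean space.\<close>
definition closed_hemi :: "'a::euclidean_space \<Rightarrow> 'a set" where
  "closed_hemi n = {x. norm x = 1 \<and> x \<bullet> n \<ge> 0}"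

definition open_hemi :: "'a::euclidean_space \<Rightarrow> 'a set" where
  "open_hemi n = {x. norm x = 1 \<and> x \<bullet> n > 0}"

definition hemi_boundary :: "'a::euclidean_space \<Rightarrow> 'a set" where
  "hemi_boundary n = {x. norm x = 1 \<and> x \<bullet> n = 0}"

text \<open>Cone over the closed hemisphere (used to take one-sided derivatives at the boundary).\<close>
definition hemi_cone :: "'a::euclidean_space \<Rightarrow> 'a set" where
  "hemi_cone n = {y. y \<bullet> n \<ge> 0 \<and> y \<noteq> 0}"

definition radial :: "('a::euclidean_space \<Rightarrow> real) \<Rightarrow> 'a \<Rightarrow> real" where
  "radial u = (\<lambda>y. u (y /\<^sub>R norm y))"

text \<open>Spherical gradient: Euclidean gradient of the homogeneous extension (tangent to the sphere).\<close>
definition sgrad :: "'a::euclidean_space \<Rightarrow> ('a \<Rightarrow> real) \<Rightarrow> 'a \<Rightarrow> 'a" where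
  "sgrad n u x = (\<Sum>b\<in>Basis. frechet_derivative (radial u) (at x within hemi_cone n) b *\<^sub>R b)"

text \<open>Spherical Hessian on tangent vectors: Euclidean Hessian of the degree-0 homogeneous
  extension (the correction term x-derivative vanishes by homogeneity).\<close>
definition shess :: "'a::euclidean_space \<Rightarrow> ('a \<Rightarrow> real) \<Rightarrow> 'a \<Rightarrow> 'a \<Rightarrow> 'a \<Rightarrow> real" where
  "shess n u x v w = frechet_derivative
      (\<lambda>y. frechet_derivative (radial u) (at y within hemi_cone n) v) (at x within hemi_cone n) w"

text \<open>Schouten tensor of g = e^{2 rho} g_0 on the round sphere (Sch(g_0) = g_0/2):
  Sch(g) = Sch(g_0) - Hess rho + d rho (x) d rho - |grad rho|^2 g_0 / 2.\<close>
definition schouten :: "'a::euclidean_space \<Rightarrow> ('a \<Rightarrow> real) \<Rightarrow> 'a \<Rightarrow> 'a \<Rightarrow> 'a \<Rightarrow> real" where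
  "schouten n \<rho> x v w =
     (v \<bullet> w) / 2 - shess n \<rho> x v w + (sgrad n \<rho> x \<bullet> v) * (sgrad n \<rho> x \<bullet> w)
     - (norm (sgrad n \<rho> x))\<^sup>2 * (v \<bullet> w) / 2"

text \<open>lam is a (ordered) vector of the eigenvalues of g^{-1} Sch(g) at x: there is a
  g_0-orthonormal basis e of the tangent space T_x S^m with Sch(g)(e_i, .) = lam_i g(e_i, .).\<close>
definition schouten_eigs :: "'a::euclidean_space \<Rightarrow> ('a \<Rightarrow> real) \<Rightarrow> 'a \<Rightarrow> real^'m \<Rightarrow> bool" where
  "schouten_eigs n \<rho> x lam \<longleftrightarrow>
     (\<exists>e::'m \<Rightarrow> 'a. (\<forall>i j. e i \<bullet> e j = (if i = j then 1 else 0)) \<and> (\<forall>i. e i \<bullet> x = 0) \<and>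
        (\<forall>i w. w \<bullet> x = 0 \<longrightarrow> schouten n \<rho> x (e i) w = lam $ i * (exp (2 * \<rho> x) * (e i \<bullet> w))))"

definition punctured_solution ::
    "(real^'m \<Rightarrow> real) \<Rightarrow> (real^'m) set \<Rightarrow> 'a::euclidean_space \<Rightarrow> ('a \<Rightarrow> real) \<Rightarrow> bool" where
  "punctured_solution f \<Gamma> n \<rho> \<longleftrightarrow>
     (\<forall>x\<in>open_hemi n - {n}. \<exists>lam::real^'m. schouten_eigs n \<rho> x lam \<and> lam \<in> closure \<Gamma> \<and> f lam = 0) \<and>
     (\<forall>x\<in>hemi_boundary n. - exp (- \<rho> x) * (sgrad n \<rho> x \<bullet> n) = 0) \<and>
     (\<exists>U \<sigma>. open U \<and> closed_hemi n \<subseteq> U \<and> C2_on U (\<sigma> :: 'a \<Rightarrow> real) \<and> \<sigma> n = 0 \<and>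
        (\<forall>x\<in>closed_hemi n - {n}. \<sigma> x = exp (- \<rho> x)))"

definition phiP :: "'a::euclidean_space \<Rightarrow> ('a \<Rightarrow> real) \<Rightarrow> 'a \<Rightarrow> 'a" where
  "phiP n \<rho> x =
    (let G = sgrad n (\<lambda>y. exp (- \<rho> y)) x;
         D = (1 + exp (- \<rho> x))\<^sup>2 + (norm G)\<^sup>2
     in ((1 - exp (- 2 * \<rho> x) + (norm G)\<^sup>2) / D) *\<^sub>R x
        - (1 / D) *\<^sub>R sgrad n (\<lambda>y. exp (- 2 * \<rho> y)) x)"

end

theory Submission imports Defs begin


definition C1d :: "'a::real_normed_vector set \<Rightarrow> ('a \<Rightarrow> 'b::real_normed_vector) \<Rightarrow> bool" where
  "C1d U F \<longleftrightarrow> (\<exists>F'. (\<forall>x\<in>U. (F has_derivative F' x) (at x)) \<and> (\<forall>v. continuous_on U (\<lambda>x. F' x v)))"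

lemma C1d_cont: "C1d U F \<Longrightarrow> continuous_on U F"
  unfolding C1d_def
  by (meson continuous_at_imp_continuous_on has_derivative_continuous)

lemma C1d_mono: "C1d U F \<Longrightarrow> V \<subseteq> U \<Longrightarrow> C1d V F"
  unfolding C1d_def by (meson continuous_on_subset subsetD)

lemma C1d_const: "C1d U (\<lambda>x. c)"
  unfolding C1d_def by (rule exI[of _ "\<lambda>x h. 0"]) auto

lemma C1d_id: "C1d U (\<lambda>x. x)"
  unfolding C1d_def by (rule exI[of _ "\<lambda>x h. h"]) auto

lemma C1d_add: "C1d U f \<Longrightarrow> C1d U g \<Longrightarrow> C1d U (\<lambda>x. f x + g x)"
  unfolding C1d_def
proof (elim exE conjE)
  fix F' G' assume a: "\<forall>x\<in>U. (f has_derivative F' x) (at x)" "\<forall>v. continuous_on U (\<lambda>x. F' x v)"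
    "\<forall>x\<in>U. (g has_derivative G' x) (at x)" "\<forall>v. continuous_on U (\<lambda>x. G' x v)"
  show "\<exists>H'. (\<forall>x\<in>U. ((\<lambda>x. f x + g x) has_derivative H' x) (at x)) \<and> (\<forall>v. continuous_on U (\<lambda>x. H' x v))"
    by (rule exI[of _ "\<lambda>x h. F' x h + G' x h"]) (use a in \<open>auto intro!: has_derivative_add continuous_intros\<close>)
qed

lemma C1d_diff: "C1d U f \<Longrightarrow> C1d U g \<Longrightarrow> C1d U (\<lambda>x. f x - g x)"
  unfolding C1d_def
proof (elim exE conjE)
  fix F' G' assume a: "\<forall>x\<in>U. (f has_derivative F' x) (at x)" "\<forall>v. continuous_on U (\<lambda>x. F' x v)"
    "\<forall>x\<in>U. (g has_derivative G' x) (at x)" "\<forall>v. continuous_on U (\<lambda>x. G' x v)"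
  show "\<exists>H'. (\<forall>x\<in>U. ((\<lambda>x. f x - g x) has_derivative H' x) (at x)) \<and> (\<forall>v. continuous_on U (\<lambda>x. H' x v))"
    by (rule exI[of _ "\<lambda>x h. F' x h - G' x h"]) (use a in \<open>auto intro!: has_derivative_diff continuous_intros\<close>)
qed

lemma C1d_scaleR: "C1d U f \<Longrightarrow> C1d U g \<Longrightarrow> C1d U (\<lambda>x. f x *\<^sub>R g x)"
proof -
  assume f: "C1d U f" and g: "C1d U g"
  have cf: "continuous_on U f" and cg: "continuous_on U g" using f g by (auto intro: C1d_cont)
  from f g obtain F' G' where a: "\<forall>x\<in>U. (f has_derivative F' x) (at x)" "\<forall>v. continuous_on U (\<lambda>x. F' x v)"
    "\<forall>x\<in>U. (g has_derivative G' x) (at x)" "\<forall>v. continuous_on U (\<lambda>x. G' x v)"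
    unfolding C1d_def by blast
  show ?thesis unfolding C1d_def
    by (rule exI[of _ "\<lambda>x h. f x *\<^sub>R G' x h + F' x h *\<^sub>R g x"]) (use a cf cg in \<open>auto intro!: has_derivative_scaleR continuous_intros\<close>)
qed

lemma C1d_mult: "C1d U f \<Longrightarrow> C1d U g \<Longrightarrow> C1d U (\<lambda>x. f x * (g x :: real))"
  using C1d_scaleR[of U f g] by simp

lemma C1d_inner: "C1d U f \<Longrightarrow> C1d U g \<Longrightarrow> C1d U (\<lambda>x. f x \<bullet> g x)"
proof -
  assume f: "C1d U f" and g: "C1d U g"
  have cf: "continuous_on U f" and cg: "continuous_on U g" using f g by (auto intro: C1d_cont)
  from f g obtain F' G' where a: "\<forall>x\<in>U. (f has_derivative F' x) (at x)" "\<forall>v. continuous_on U (\<lambda>x. F' x v)"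
    "\<forall>x\<in>U. (g has_derivative G' x) (at x)" "\<forall>v. continuous_on U (\<lambda>x. G' x v)"
    unfolding C1d_def by blast
  show ?thesis unfolding C1d_def
    by (rule exI[of _ "\<lambda>x h. f x \<bullet> G' x h + F' x h \<bullet> g x"]) (use a cf cg in \<open>auto intro!: has_derivative_inner continuous_intros\<close>)
qed

lemma C1d_divide: "C1d U f \<Longrightarrow> C1d U g \<Longrightarrow> (\<forall>x\<in>U. g x \<noteq> 0) \<Longrightarrow> C1d U (\<lambda>x. f x / (g x :: real))"
proof -
  assume f: "C1d U f" and g: "C1d U g" and nz: "\<forall>x\<in>U. g x \<noteq> 0"
  have cf: "continuous_on U f" and cg: "continuous_on U g" using f g by (auto intro: C1d_cont)
  from f g obtain F' G' where a: "\<forall>x\<in>U. (f has_derivative F' x) (at x)" "\<forall>v. continuous_on U (\<lambda>x. F' x v)"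
    "\<forall>x\<in>U. (g has_derivative G' x) (at x)" "\<forall>v. continuous_on U (\<lambda>x. G' x v)"
    unfolding C1d_def by blast
  show ?thesis unfolding C1d_def
  proof (rule exI[of _ "\<lambda>x h. - f x * (inverse (g x) * G' x h * inverse (g x)) + F' x h / g x"], intro conjI ballI allI)
    fix x assume x: "x \<in> U"
    show "((\<lambda>x. f x / g x) has_derivative (\<lambda>h. - f x * (inverse (g x) * G' x h * inverse (g x)) + F' x h / g x)) (at x)"
      using has_derivative_divide[of f "F' x" x UNIV g "G' x"] a x nz by blast
  next
    fix v show "continuous_on U (\<lambda>x. - f x * (inverse (g x) * G' x v * inverse (g x)) + F' x v / g x)"
      using a cf cg nz by (auto intro!: continuous_intros)
  qed
qed

lemma C1d_sum: "finite I \<Longrightarrow> (\<And>i. i \<in> I \<Longrightarrow> C1d U (f i)) \<Longrightarrow> C1d U (\<lambda>x. \<Sum>i\<in>I. f i x)"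
proof (induction I rule: finite_induct)
  case empty then show ?case using C1d_const[of U 0] by simp
next
  case (insert a I)
  then show ?case by (simp add: C1d_add)
qed

lemma C1d_imp_C1_on:
  fixes F :: "'a::euclidean_space \<Rightarrow> 'b::real_normed_vector"
  assumes U: "open U" and c: "C1d U F"
  shows "\<exists>F'. (\<forall>x\<in>U. (F has_derivative blinfun_apply (F' x)) (at x)) \<and> continuous_on U F'"
proof -
  from c obtain F' where d: "\<forall>x\<in>U. (F has_derivative F' x) (at x)" and cc: "\<forall>v. continuous_on U (\<lambda>x. F' x v)"
    unfolding C1d_def by blast
  define B where "B x = Blinfun (F' x)" for x
  have ap: "blinfun_apply (B x) = F' x" if "x \<in> U" for x
    unfolding B_def using d that by (metis bounded_linear_Blinfun_apply has_derivative_bounded_linear)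
  have "continuous_on U B"
  proof (rule continuous_on_blinfun_componentwise)
    fix i :: 'a
    show "continuous_on U (\<lambda>x. blinfun_apply (B x) i)"
      using continuous_on_cong[OF refl, of U "\<lambda>x. blinfun_apply (B x) i" "\<lambda>x. F' x i"] cc ap by simp
  qed
  then show ?thesis using d ap by (intro exI[of _ B]) auto
qed



lemma normalize_deriv:
  fixes x :: "'a::euclidean_space"
  assumes nx: "norm x = 1"
  shows "((\<lambda>y. y /\<^sub>R norm y) has_derivative (\<lambda>h. h - (x \<bullet> h) *\<^sub>R x)) (at x)"
proof -
  have x0: "x \<noteq> 0" using nx by auto
  have "((\<lambda>y. inverse (norm y) *\<^sub>R y) has_derivative
      (\<lambda>h. inverse (norm x) *\<^sub>R h + (- (inverse (norm x) * (h \<bullet> sgn x) * inverse (norm x))) *\<^sub>R x)) (at x)"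
    using has_derivative_scaleR[OF has_derivative_compose[OF has_derivative_norm[OF x0] has_derivative_inverse'] has_derivative_ident] x0
    by simp
  moreover have "(\<lambda>h. inverse (norm x) *\<^sub>R h + (- (inverse (norm x) * (h \<bullet> sgn x) * inverse (norm x))) *\<^sub>R x)
      = (\<lambda>h. h - (x \<bullet> h) *\<^sub>R x)"
    using nx by (auto simp: sgn_div_norm inner_commute)
  ultimately show ?thesis by simp
qed

lemma sgrad_eq:
  fixes n :: "'a::euclidean_space"
  assumes n: "n \<in> Basis" and chU: "closed_hemi n \<subseteq> U"
    and d: "\<forall>x\<in>U. (\<tau> has_derivative T' x) (at x)"
    and eq: "\<forall>y\<in>closed_hemi n - {n}. u y = \<tau> y"
    and x: "x \<in> closed_hemi n - {n}"
  shows "sgrad n u x = (\<Sum>b\<in>Basis. T' x (b - (x \<bullet> b) *\<^sub>R x) *\<^sub>R b)"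
proof -
  let ?N = "\<lambda>y::'a. y /\<^sub>R norm y"
  let ?D = "\<lambda>h. T' x (h - (x \<bullet> h) *\<^sub>R x)"
  have nx: "norm x = 1" and xn: "x \<bullet> n \<ge> 0" and xne: "x \<noteq> n" using x by (auto simp: closed_hemi_def)
  have x0: "x \<noteq> 0" using nx by auto
  have xU: "x \<in> U" using x chU by auto
  have Nx: "?N x = x" using nx by simp
  have dN: "(?N has_derivative (\<lambda>h. h - (x \<bullet> h) *\<^sub>R x)) (at x)" by (rule normalize_deriv[OF nx])
  have "isCont ?N x" using dN by (rule has_derivative_continuous)
  moreover have "dist x n > 0" using xne by simp
  ultimately obtain d1 where d1: "d1 > 0" "\<And>y. dist y x < d1 \<Longrightarrow> dist (?N y) (?N x) < dist x n"
    unfolding continuous_at_eps_delta by blast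
  have xc: "x \<in> hemi_cone n" using xn x0 by (simp add: hemi_cone_def)
  have h1: "((\<lambda>y. \<tau> (?N y)) has_derivative ?D) (at x within hemi_cone n)"
    using has_derivative_compose[OF has_derivative_at_withinI[OF dN], of \<tau> "T' x"] d xU Nx by simp
  have h2: "(radial u has_derivative ?D) (at x within hemi_cone n)"
  proof (rule has_derivative_transform_within[OF h1 d1(1) xc])
    fix y assume y: "y \<in> hemi_cone n" "dist y x < d1"
    have y0: "y \<noteq> 0" and yn: "y \<bullet> n \<ge> 0" using y by (auto simp: hemi_cone_def)
    have "norm (?N y) = 1" using y0 by simp
    moreover have "?N y \<bullet> n \<ge> 0" using yn by simp
    moreover have "?N y \<noteq> n" using d1(2)[OF y(2)] Nx by (auto simp: dist_commute)
    ultimately have "?N y \<in> closed_hemi n - {n}" by (simp add: closed_hemi_def)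
    then show "\<tau> (?N y) = radial u y" using eq by (simp add: radial_def)
  qed
  have fd: "frechet_derivative (radial u) (at x within hemi_cone n) = ?D"
  proof -
    have ex: "\<exists>D. (radial u has_derivative D) (at x within hemi_cone n)" using h2 by blast
    have "(radial u has_derivative frechet_derivative (radial u) (at x within hemi_cone n)) (at x within hemi_cone n)"
      unfolding frechet_derivative_def using someI_ex[OF ex] .
    then show ?thesis
    proof (rule frechet_derivative_unique_within[OF _ h2])
      fix i :: 'a and e :: real assume i: "i \<in> Basis" and e: "e > 0"
      define dd where "dd = min (e/2) (1/2)"
      have dd: "0 < dd" "dd < e" "dd \<le> 1/2" using e by (auto simp: dd_def)
      have "i \<bullet> n \<ge> 0" using i n by (simp add: inner_Basis)
      then have "(x + dd *\<^sub>R i) \<bullet> n \<ge> 0" using xn dd by (simp add: inner_add_left)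
      moreover have "x + dd *\<^sub>R i \<noteq> 0"
      proof
        assume "x + dd *\<^sub>R i = 0"
        then have "x = - (dd *\<^sub>R i)" by (simp add: eq_neg_iff_add_eq_0)
        then have "norm x = dd" using i dd by simp
        then show False using nx dd by simp
      qed
      ultimately show "\<exists>d. 0 < \<bar>d\<bar> \<and> \<bar>d\<bar> < e \<and> x + d *\<^sub>R i \<in> hemi_cone n"
        using dd by (intro exI[of _ dd]) (simp add: hemi_cone_def)
    qed
  qed
  show ?thesis unfolding sgrad_def fd ..
qed



lemma C1d_blinfun_apply:
  fixes S :: "'a::real_normed_vector \<Rightarrow> 'c::real_normed_vector \<Rightarrow>\<^sub>L 'd::real_normed_vector"
  assumes s: "C1d U S" and w: "C1d U w"
  shows "C1d U (\<lambda>x. blinfun_apply (S x) (w x))"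
proof -
  have cs: "continuous_on U S" and cw: "continuous_on U w" using s w by (auto intro: C1d_cont)
  from s w obtain S' W' where a: "\<forall>x\<in>U. (S has_derivative S' x) (at x)" "\<forall>v. continuous_on U (\<lambda>x. S' x v)"
    "\<forall>x\<in>U. (w has_derivative W' x) (at x)" "\<forall>v. continuous_on U (\<lambda>x. W' x v)"
    unfolding C1d_def by blast
  note bb = bounded_bilinear_blinfun_apply
  show ?thesis unfolding C1d_def
  proof (rule exI[of _ "\<lambda>x h. blinfun_apply (S x) (W' x h) + blinfun_apply (S' x h) (w x)"], intro conjI ballI allI)
    fix x assume x: "x \<in> U"
    show "((\<lambda>x. blinfun_apply (S x) (w x)) has_derivative (\<lambda>h. blinfun_apply (S x) (W' x h) + blinfun_apply (S' x h) (w x))) (at x)"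
      using bounded_bilinear.FDERIV[OF bb, of S "S' x" x UNIV w "W' x"] a x by blast
  next
    fix v
    have 1: "continuous_on U (\<lambda>x. blinfun_apply (S x) (W' x v))"
      using bounded_bilinear.continuous_on[OF bb cs a(4)[rule_format, of v]] .
    have 2: "continuous_on U (\<lambda>x. blinfun_apply (S' x v) (w x))"
      using bounded_bilinear.continuous_on[OF bb a(2)[rule_format, of v] cw] .
    show "continuous_on U (\<lambda>x. blinfun_apply (S x) (W' x v) + blinfun_apply (S' x v) (w x))"
      using 1 2 by (rule continuous_on_add)
  qed
qed

lemma C1_on_C1d: "C1_on U F \<Longrightarrow> C1d U F"
  unfolding C1_on_def C1d_def
proof (elim exE conjE)
  fix F' assume a: "\<forall>x\<in>U. (F has_derivative blinfun_apply (F' x)) (at x)" "continuous_on U F'"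
  show "\<exists>F'a. (\<forall>x\<in>U. (F has_derivative F'a x) (at x)) \<and> (\<forall>v. continuous_on U (\<lambda>x. F'a x v))"
    by (rule exI[of _ "\<lambda>x. blinfun_apply (F' x)"])
       (use a bounded_bilinear.continuous_on[OF bounded_bilinear_blinfun_apply a(2) continuous_on_const] in auto)
qed

theorem mainTheorem14:
  fixes f :: "real^'m \<Rightarrow> real" and \<Gamma> :: "(real^'m) set"
    and n :: "'a::euclidean_space" and \<rho> :: "'a \<Rightarrow> real"
  assumes "CARD('m) \<ge> 3"
    and "DIM('a) = CARD('m) + 1"
    and "n \<in> Basis"
    and "elliptic_data f \<Gamma>"
    and "punctured_solution f \<Gamma> n \<rho>"
  shows "\<exists>U \<Phi>. open U \<and> closed_hemi n \<subseteq> U \<and> C1_on U (\<Phi> :: 'a \<Rightarrow> 'a) \<and>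
           (\<forall>x\<in>closed_hemi n - {n}. \<Phi> x = phiP n \<rho> x)"
proof -
  note nB = assms(3)
  from assms(5) obtain U \<sigma> where U: "open U" "closed_hemi n \<subseteq> U" and c2: "C2_on U (\<sigma> :: 'a \<Rightarrow> real)"
    and s0: "\<sigma> n = 0" and se: "\<forall>x\<in>closed_hemi n - {n}. \<sigma> x = exp (- \<rho> x)"
    unfolding punctured_solution_def by blast
  from c2 obtain S where dS: "\<forall>x\<in>U. (\<sigma> has_derivative blinfun_apply (S x)) (at x)" and c1S: "C1_on U S"
    unfolding C2_on_def by blast
  have CS: "C1d U S" using c1S by (rule C1_on_C1d)
  have Cs: "C1d U \<sigma>"
  proof -
    have "continuous_on U S" using CS by (rule C1d_cont)
    then show ?thesis unfolding C1d_def
      by (intro exI[of _ "\<lambda>x. blinfun_apply (S x)"])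
         (use dS bounded_bilinear.continuous_on[OF bounded_bilinear_blinfun_apply _ continuous_on_const] in auto)
  qed
  define T where "T x = (\<Sum>b\<in>Basis. blinfun_apply (S x) (b - (x \<bullet> b) *\<^sub>R x) *\<^sub>R b)" for x
  have CT: "C1d U T"
    unfolding T_def
    by (intro C1d_sum finite_Basis C1d_scaleR C1d_blinfun_apply CS C1d_diff C1d_const C1d_inner C1d_id)
  have sg1: "sgrad n (\<lambda>y. exp (- \<rho> y)) x = T x" if x: "x \<in> closed_hemi n - {n}" for x
    unfolding T_def
    by (rule sgrad_eq[OF nB U(2) dS _ x]) (use se in auto)
  have sg2: "sgrad n (\<lambda>y. exp (- 2 * \<rho> y)) x = (2 * \<sigma> x) *\<^sub>R T x" if x: "x \<in> closed_hemi n - {n}" for x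
  proof -
    have d2: "\<forall>x\<in>U. ((\<lambda>y. \<sigma> y * \<sigma> y) has_derivative (\<lambda>h. \<sigma> x * S x h + S x h * \<sigma> x)) (at x)"
      using dS has_derivative_mult[of \<sigma> _ _ UNIV \<sigma>] by blast
    have e2: "\<forall>y\<in>closed_hemi n - {n}. exp (- 2 * \<rho> y) = \<sigma> y * \<sigma> y"
      using se by (auto simp: exp_add[symmetric])
    have "sgrad n (\<lambda>y. exp (- 2 * \<rho> y)) x =
        (\<Sum>b\<in>Basis. (\<sigma> x * S x (b - (x \<bullet> b) *\<^sub>R x) + S x (b - (x \<bullet> b) *\<^sub>R x) * \<sigma> x) *\<^sub>R b)"
      by (rule sgrad_eq[OF nB U(2) d2 e2 x])
    also have "\<dots> = (2 * \<sigma> x) *\<^sub>R T x"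
      unfolding T_def scaleR_sum_right by (rule sum.cong) (auto simp: algebra_simps)
    finally show ?thesis .
  qed
  define V where "V = U \<inter> \<sigma> -` {-1<..}"
  have oV: "open V" using continuous_on_open_vimage[OF U(1)] C1d_cont[OF Cs] unfolding V_def
    by (metis Int_commute open_greaterThan)
  have hV: "closed_hemi n \<subseteq> V"
  proof
    fix x assume x: "x \<in> closed_hemi n"
    have "\<sigma> x \<ge> 0"
    proof (cases "x = n")
      case True then show ?thesis using s0 by simp
    next
      case False then show ?thesis using se x by (simp add: less_imp_le)
    qed
    then show "x \<in> V" using x U(2) by (auto simp: V_def)
  qed
  define D where "D x = (1 + \<sigma> x) * (1 + \<sigma> x) + T x \<bullet> T x" for x
  define \<Phi> where "\<Phi> x = ((1 - \<sigma> x * \<sigma> x + T x \<bullet> T x) / D x) *\<^sub>R x - (1 / D x) *\<^sub>R ((2 * \<sigma> x) *\<^sub>R T x)" for x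
  have CsV: "C1d V \<sigma>" and CTV: "C1d V T" using Cs CT by (auto intro: C1d_mono simp: V_def)
  have Dpos: "D x > 0" if "x \<in> V" for x
  proof -
    have "1 + \<sigma> x > 0" using that by (simp add: V_def)
    then have "(1 + \<sigma> x) * (1 + \<sigma> x) > 0" by simp
    then show ?thesis unfolding D_def by (simp add: add_pos_nonneg)
  qed
  have CD: "C1d V D" unfolding D_def
    by (intro C1d_add C1d_mult C1d_inner C1d_const CsV CTV)
  have CPhi: "C1d V \<Phi>" unfolding \<Phi>_def
    by (intro C1d_diff C1d_scaleR C1d_divide C1d_id C1d_const C1d_add C1d_mult C1d_inner CsV CTV CD)
       (use Dpos in \<open>auto simp: less_imp_neq[symmetric]\<close>)
  have "C1_on V \<Phi>" unfolding C1_on_def using C1d_imp_C1_on[OF oV CPhi] .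
  moreover have "\<forall>x\<in>closed_hemi n - {n}. \<Phi> x = phiP n \<rho> x"
  proof
    fix x assume x: "x \<in> closed_hemi n - {n}"
    have e1: "exp (- \<rho> x) = \<sigma> x" using se x by simp
    have e2: "exp (- 2 * \<rho> x) = \<sigma> x * \<sigma> x" using se x by (simp add: exp_add[symmetric])
    have nn: "norm (T x) * norm (T x) = T x \<bullet> T x" by (metis dot_square_norm power2_eq_square)
    show "\<Phi> x = phiP n \<rho> x"
      unfolding phiP_def Let_def sg1[OF x] sg2[OF x] e1 e2 \<Phi>_def D_def
      by (simp add: power2_eq_square nn)
  qed
  ultimately show ?thesis using oV hV by blast
qed

end
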